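(* Let $x_0\in\mathcal H$ and $a\in\mathbb R^m_+$, and assume that $\mathcal{LP}_w(F,F(x))\neq\emptyset$ for every $x\in\mathcal L(F,F(x_0)+a)$. Then for every $x\in\mathcal L(F,F(x_0)+a)$, $$\varphi(x)=\sup_{z\in\mathcal{LP}_w(F,F(x_0)+a)}\ \min_{i=1,\dots,m}\big(f_i(x)-f_i(z)\big).$$
   Context: $\mathcal H$ is a real Hilbert space with inner product $\langle\cdot,\cdot\rangle$ and norm $\|\cdot\|$. $f_1,\dots,f_m:\mathcal H\to\mathbb R$ are convex and continuously differentiable, and $F=(f_1,\dots,f_m)^\top$. A point $x^*\in\mathcal H$ is weak Pareto optimal if there is no $x\in\mathcal H$ with $f_i(x)<f_i(x^* )$ for all $i=1,\dots,m$; $\mathcal P_w$ denotes the set of weak Pareto optimal points. For $a\in\mathbb R^m$, $\mathcal L(F,a):=\{x\in\mathcal H: f_i(x)\le a_i \text{ for all } i\}$ and $\mathcal{LP}_w(F,a):=\mathcal L(F,a)\cap\mathcal P_w$. The merit function is $\varphi(x):=\sup_{z\in\mathcal H}\min_{i=1,\dots,m}(f_i(x)-f_i(z))$. *)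

theory Defs
  imports "HOL-Analysis.Analysis"
begin

text \<open>Objectives are indexed by i < m: F = (f 0, ..., f (m-1)).\<close>

definition weak_pareto :: "nat \<Rightarrow> (nat \<Rightarrow> 'a \<Rightarrow> real) \<Rightarrow> 'a set" where
  "weak_pareto m f = {xs. \<not> (\<exists>x. \<forall>i<m. f i x < f i xs)}"

definition level_set :: "nat \<Rightarrow> (nat \<Rightarrow> 'a \<Rightarrow> real) \<Rightarrow> (nat \<Rightarrow> real) \<Rightarrow> 'a set" where
  "level_set m f a = {x. \<forall>i<m. f i x \<le> a i}"

definition level_pareto :: "nat \<Rightarrow> (nat \<Rightarrow> 'a \<Rightarrow> real) \<Rightarrow> (nat \<Rightarrow> real) \<Rightarrow> 'a set" where
  "level_pareto m f a = level_set m f a \<inter> weak_pareto m f"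

text \<open>Merit function, valued in the extended reals (the supremum may be infinite).\<close>
definition merit :: "nat \<Rightarrow> (nat \<Rightarrow> 'a \<Rightarrow> real) \<Rightarrow> 'a \<Rightarrow> ereal" where
  "merit m f x = (SUP z\<in>UNIV. ereal (Min ((\<lambda>i. f i x - f i z) ` {..<m})))"

end

theory Submission
  imports Defs
begin

theorem mainTheorem1:
  fixes f :: "nat \<Rightarrow> 'a::{real_inner, complete_space} \<Rightarrow> real"
    and m :: nat and x0 :: 'a and a :: "nat \<Rightarrow> real"
  assumes m_pos: "m \<ge> 1"
    and convex: "\<And>i. i < m \<Longrightarrow> convex_on UNIV (f i)"
    and C1: "\<And>i. i < m \<Longrightarrow> \<exists>g. (\<forall>x. (f i has_derivative (\<lambda>h. g x \<bullet> h)) (at x))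
                                 \<and> continuous_on UNIV g"
    and a_nonneg: "\<And>i. i < m \<Longrightarrow> a i \<ge> 0"
    and nonempty: "\<And>x. x \<in> level_set m f (\<lambda>i. f i x0 + a i) \<Longrightarrow>
                      level_pareto m f (\<lambda>i. f i x) \<noteq> {}"
  shows "\<forall>x \<in> level_set m f (\<lambda>i. f i x0 + a i).
           merit m f x = (SUP z\<in>level_pareto m f (\<lambda>i. f i x0 + a i).
                            ereal (Min ((\<lambda>i. f i x - f i z) ` {..<m})))"
proof
  fix x assume xL: "x \<in> level_set m f (\<lambda>i. f i x0 + a i)"
  define g where "g z = Min ((\<lambda>i. f i x - f i z) ` {..<m})" for z
  have ne: "(\<lambda>i. f i x - f i z) ` {..<m} \<noteq> {}" for z using m_pos by (simp add: lessThan_empty_iff)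
  have fin: "finite ((\<lambda>i. f i x - f i z) ` {..<m})" for z by simp
  have mono: "g z \<le> g w" if "\<forall>i<m. f i w \<le> f i z" for z w
  proof -
    have "g z \<le> f i x - f i w" if "i < m" for i
    proof -
      have "g z \<le> f i x - f i z" unfolding g_def using that by (intro Min_le) auto
      also have "\<dots> \<le> f i x - f i w" using \<open>\<forall>i<m. f i w \<le> f i z\<close> that by auto
      finally show ?thesis .
    qed
    then show ?thesis unfolding g_def using Min_ge_iff[OF fin ne] by auto
  qed
  have key: "\<exists>w\<in>level_pareto m f (\<lambda>i. f i x0 + a i). g z \<le> g w" for z
  proof (cases "\<forall>i<m. f i z \<le> f i x")
    case True
    have zL: "z \<in> level_set m f (\<lambda>i. f i x0 + a i)"
      using True xL unfolding level_set_def by (auto intro: order_trans)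
    obtain w where w: "w \<in> level_pareto m f (\<lambda>i. f i z)" using nonempty[OF zL] by blast
    have wle: "\<forall>i<m. f i w \<le> f i z" using w unfolding level_pareto_def level_set_def by auto
    have "w \<in> level_pareto m f (\<lambda>i. f i x0 + a i)"
      using w zL unfolding level_pareto_def level_set_def by (auto intro: order_trans)
    then show ?thesis using mono[OF wle] by blast
  next
    case False
    then obtain j where j: "j < m" "f i z > f i x" if "i = j" for i by auto
    obtain w where w: "w \<in> level_pareto m f (\<lambda>i. f i x)" using nonempty[OF xL] by blast
    have wle: "\<forall>i<m. f i w \<le> f i x" using w unfolding level_pareto_def level_set_def by auto
    have "w \<in> level_pareto m f (\<lambda>i. f i x0 + a i)"
      using w xL unfolding level_pareto_def level_set_def by (auto intro: order_trans)
    moreover have "g z \<le> 0"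
    proof -
      have "g z \<le> f j x - f j z" unfolding g_def using j by (intro Min_le) auto
      then show ?thesis using j by auto
    qed
    moreover have "0 \<le> g w"
      unfolding g_def using Min_ge_iff[OF fin ne] wle by auto
    ultimately show ?thesis by (meson order_trans)
  qed
  show "merit m f x = (SUP z\<in>level_pareto m f (\<lambda>i. f i x0 + a i). ereal (g z))"
    unfolding merit_def g_def[symmetric]
  proof (rule antisym)
    show "(SUP z\<in>UNIV. ereal (g z)) \<le> (SUP z\<in>level_pareto m f (\<lambda>i. f i x0 + a i). ereal (g z))"
    proof (rule SUP_least)
      fix z :: 'a
      obtain w where "w \<in> level_pareto m f (\<lambda>i. f i x0 + a i)" "g z \<le> g w" using key by blast
      then show "ereal (g z) \<le> (SUP z\<in>level_pareto m f (\<lambda>i. f i x0 + a i). ereal (g z))"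
        by (meson SUP_upper2 ereal_less_eq(3))
    qed
    show "(SUP z\<in>level_pareto m f (\<lambda>i. f i x0 + a i). ereal (g z)) \<le> (SUP z\<in>UNIV. ereal (g z))"
      by (rule SUP_subset_mono) auto
  qed
qed

end
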